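(* Let $p\ge3$, $D=\operatorname{diag}(d_1,\ldots,d_p)$ with $d_j>0$, and $\Gamma=\operatorname{diag}(\gamma_1,\ldots,\gamma_p)$ with $\gamma_j\ge0$, with indices sorted so that $d_1^2/(d_1+\gamma_1)\ge d_2^2/(d_2+\gamma_2)\ge\cdots\ge d_p^2/(d_p+\gamma_p)$. Consider the problem \[ \max_{A}\; c^*(D,A)=\sum_{j=1}^p d_ja_j-2\max_{j=1,\ldots,p} d_ja_j \] over diagonal matrices $A=\operatorname{diag}(a_1,\ldots,a_p)$ with $a_j\ge0$ ($j=1,\ldots,p$) and $\sum_{j=1}^p(d_j+\gamma_j)a_j^2=\sum_{j=1}^p d_j^2/(d_j+\gamma_j)$ (this constraint set is nonempty, containing $a_j=d_j/(d_j+\gamma_j)$). Then: (i) there exists a unique solution $A^\dagger=\operatorname{diag}(a_1^\dagger,\ldots,a_p^\dagger)$ to this problem; (ii) letting $\nu$ be the largest index such that $d_\nu a_\nu^\dagger=\max(d_1a_1^\dagger,\ldots,d_pa_p^\dagger)$, we have $\nu\ge3$, $d_1a_1^\dagger=\cdots=d_\nu a_\nu^\dagger>d_ja_j^\dagger$ for $j\ge\nu+1$, and \[ a_j^\dagger=K_\nu\Big(\sum_{k=1}^\nu\frac{d_k+\gamma_k}{d_k^2}\Big)^{-1}\frac{\nu-2}{d_j}\ (j=1,\ldots,\nu),\qquad a_j^\dagger=K_\nu\frac{d_j}{d_j+\gamma_j}\ (j=\nu+1,\ldots,p), \] where $K_\nu=\{\sum_{j=1}^p d_j^2/(d_j+\gamma_j)\}^{1/2}M_\nu^{-1/2}$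 and \[ M_\nu=\frac{(\nu-2)^2}{\sum_{j=1}^\nu (d_j+\gamma_j)/d_j^2}+\sum_{j=\nu+1}^p\frac{d_j^2}{d_j+\gamma_j}; \] the achieved maximum value is $c^*(D,A^\dagger)=K_\nu M_\nu>0$; (iii) if $X\sim N_p(\theta,D)$ with unknown $\theta\in\mathbb R^p$, then the estimator $\delta_{A^\dagger}(X)=X-\frac{c^*(D,A^\dagger)}{X^\top A^{\dagger\top}A^\dagger X}A^\dagger X$ is minimax under the loss $\|\delta-\theta\|^2$.
   Context: An empty sum is $0$. An estimator $\delta$ of $\theta$ is minimax (under squared Euclidean loss) if $E_\theta\|\delta(X)-\theta\|^2\le\operatorname{tr}(D)=\sum_j d_j$ for all $\theta\in\mathbb R^p$. *)

theory Defs
  imports "HOL-Probability.Probability"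
begin

(* Indices run over {1..p}; a diagonal matrix diag(x_1,...,x_p) is represented by
   the function x :: nat => real restricted to {1..p}. *)

definition feasible :: "nat \<Rightarrow> (nat \<Rightarrow> real) \<Rightarrow> (nat \<Rightarrow> real) \<Rightarrow> (nat \<Rightarrow> real) \<Rightarrow> bool" where
  "feasible p d \<gamma> a \<longleftrightarrow> (\<forall>j\<in>{1..p}. a j \<ge> 0) \<and>
     (\<Sum>j=1..p. (d j + \<gamma> j) * (a j)\<^sup>2) = (\<Sum>j=1..p. (d j)\<^sup>2 / (d j + \<gamma> j))"

definition cstar :: "nat \<Rightarrow> (nat \<Rightarrow> real) \<Rightarrow> (nat \<Rightarrow> real) \<Rightarrow> real" where
  "cstar p d a = (\<Sum>j=1..p. d j * a j) - 2 * Max ((\<lambda>j. d j * a j) ` {1..p})"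

definition is_solution :: "nat \<Rightarrow> (nat \<Rightarrow> real) \<Rightarrow> (nat \<Rightarrow> real) \<Rightarrow> (nat \<Rightarrow> real) \<Rightarrow> bool" where
  "is_solution p d \<gamma> a \<longleftrightarrow> feasible p d \<gamma> a \<and>
     (\<forall>b. feasible p d \<gamma> b \<longrightarrow> cstar p d b \<le> cstar p d a)"

text \<open>Distribution of X ~ N_p(theta, diag(d_1,...,d_p)): independent normal coordinates
  with mean theta j and variance d j (standard deviation sqrt (d j)).\<close>
definition normal_diag :: "nat \<Rightarrow> (nat \<Rightarrow> real) \<Rightarrow> (nat \<Rightarrow> real) \<Rightarrow> (nat \<Rightarrow> real) measure" where
  "normal_diag p \<theta> d = (\<Pi>\<^sub>M j\<in>{1..p}. density lborel (normal_density (\<theta> j) (sqrt (d j))))"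

definition delta_est :: "nat \<Rightarrow> real \<Rightarrow> (nat \<Rightarrow> real) \<Rightarrow> (nat \<Rightarrow> real) \<Rightarrow> nat \<Rightarrow> real" where
  "delta_est p c a x j = x j - c / (\<Sum>k=1..p. (a k * x k)\<^sup>2) * (a j * x j)"

definition minimax :: "nat \<Rightarrow> (nat \<Rightarrow> real) \<Rightarrow> ((nat \<Rightarrow> real) \<Rightarrow> nat \<Rightarrow> real) \<Rightarrow> bool" where
  "minimax p d \<delta> \<longleftrightarrow> (\<forall>\<theta>::nat \<Rightarrow> real.
     (\<integral>\<^sup>+ x. ennreal (\<Sum>j=1..p. (\<delta> x j - \<theta> j)\<^sup>2) \<partial>normal_diag p \<theta> d)
       \<le> ennreal (\<Sum>j=1..p. d j))"

end

theory Submission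
  imports Defs "HOL-Real_Asymp.Real_Asymp"
begin


lemma nd_tendsto_top: assumes "(\<sigma>::real) > 0" shows "(normal_density \<mu> \<sigma> \<longlongrightarrow> 0) at_top"
  unfolding normal_density_def using assms by real_asymp
lemma nd_tendsto_bot: assumes "(\<sigma>::real) > 0" shows "(normal_density \<mu> \<sigma> \<longlongrightarrow> 0) at_bot"
  unfolding normal_density_def using assms by real_asymp

lemma nd_deriv: assumes "(\<sigma>::real) > 0"
  shows "(normal_density \<mu> \<sigma> has_real_derivative normal_density \<mu> \<sigma> y * (-(y-\<mu>)/\<sigma>\<^sup>2)) (at y)"
proof -
  have e: "((\<lambda>y. -(y-\<mu>)\<^sup>2/(2*\<sigma>\<^sup>2)) has_real_derivative (-(y-\<mu>)/\<sigma>\<^sup>2)) (at y)"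
    using assms by (auto intro!: derivative_eq_intros simp: field_simps power2_eq_square)
  have "((\<lambda>y. 1 / sqrt (2 * pi * \<sigma>\<^sup>2) * exp (-(y - \<mu>)\<^sup>2/ (2 * \<sigma>\<^sup>2))) has_real_derivative
     1 / sqrt (2 * pi * \<sigma>\<^sup>2) * (exp (-(y - \<mu>)\<^sup>2/ (2 * \<sigma>\<^sup>2)) * (-(y-\<mu>)/\<sigma>\<^sup>2))) (at y)"
    by (intro DERIV_cmult DERIV_chain2[OF DERIV_exp e])
  then show ?thesis unfolding normal_density_def[abs_def] by (simp add: mult.assoc)
qed

lemma stein_1d:
  fixes g g' :: "real \<Rightarrow> real" and \<mu> \<sigma> B :: real
  assumes \<sigma>: "\<sigma> > 0"
    and der: "\<And>y. (g has_real_derivative g' y) (at y)"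
    and cont: "continuous_on UNIV g'"
    and bg: "\<And>y. \<bar>g y\<bar> \<le> B" and bg': "\<And>y. \<bar>g' y\<bar> \<le> B"
  shows "integrable lborel (\<lambda>y. normal_density \<mu> \<sigma> y * ((y-\<mu>) * g y))"
    and "integrable lborel (\<lambda>y. normal_density \<mu> \<sigma> y * g' y)"
    and "(\<integral>y. normal_density \<mu> \<sigma> y * ((y-\<mu>) * g y) \<partial>lborel)
          = \<sigma>\<^sup>2 * (\<integral>y. normal_density \<mu> \<sigma> y * g' y \<partial>lborel)"
proof -
  have contg: "continuous_on UNIV g"
    using der by (intro continuous_at_imp_continuous_on) (auto intro: DERIV_isCont)
  have mg[measurable]: "g \<in> borel_measurable borel"
    using contg by (rule borel_measurable_continuous_onI)
  have mg'[measurable]: "g' \<in> borel_measurable borel"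
    using cont by (rule borel_measurable_continuous_onI)
  have B0: "0 \<le> B" using bg[of 0] by simp
  show i1: "integrable lborel (\<lambda>y. normal_density \<mu> \<sigma> y * ((y-\<mu>) * g y))"
  proof (rule Bochner_Integration.integrable_bound)
    show "integrable lborel (\<lambda>y. B * (normal_density \<mu> \<sigma> y * \<bar>y - \<mu>\<bar>^1))"
      using integrable_normal_moment_abs[OF \<sigma>, of \<mu> 1] by simp
    show "AE y in lborel. norm (normal_density \<mu> \<sigma> y * ((y-\<mu>) * g y)) \<le> norm (B * (normal_density \<mu> \<sigma> y * \<bar>y - \<mu>\<bar>^1))"
    proof (intro AE_I2)
      fix y
      have "normal_density \<mu> \<sigma> y * (\<bar>y-\<mu>\<bar> * \<bar>g y\<bar>) \<le> normal_density \<mu> \<sigma> y * (\<bar>y-\<mu>\<bar> * B)"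
        by (intro mult_left_mono) (auto simp: bg)
      then show "norm (normal_density \<mu> \<sigma> y * ((y-\<mu>) * g y)) \<le> norm (B * (normal_density \<mu> \<sigma> y * \<bar>y - \<mu>\<bar>^1))"
        using B0 by (simp add: abs_mult ac_simps)
    qed
  qed measurable
  show i2: "integrable lborel (\<lambda>y. normal_density \<mu> \<sigma> y * g' y)"
  proof (rule Bochner_Integration.integrable_bound)
    show "integrable lborel (\<lambda>y. B * normal_density \<mu> \<sigma> y)"
      using integrable_normal_density[OF \<sigma>] by simp
    show "AE y in lborel. norm (normal_density \<mu> \<sigma> y * g' y) \<le> norm (B * normal_density \<mu> \<sigma> y)"
    proof (intro AE_I2)
      fix y
      have "normal_density \<mu> \<sigma> y * \<bar>g' y\<bar> \<le> normal_density \<mu> \<sigma> y * B"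
        by (intro mult_left_mono) (auto simp: bg')
      then show "norm (normal_density \<mu> \<sigma> y * g' y) \<le> norm (B * normal_density \<mu> \<sigma> y)"
        using B0 by (simp add: abs_mult ac_simps)
    qed
  qed measurable
  define f where "f y = g' y * normal_density \<mu> \<sigma> y + g y * (normal_density \<mu> \<sigma> y * (-(y-\<mu>)/\<sigma>\<^sup>2))" for y
  have fint: "integrable lborel f"
  proof -
    have "integrable lborel (\<lambda>y. normal_density \<mu> \<sigma> y * g' y - (1/\<sigma>\<^sup>2) * (normal_density \<mu> \<sigma> y * ((y-\<mu>) * g y)))"
      using i1 i2 by auto
    also have "(\<lambda>y. normal_density \<mu> \<sigma> y * g' y - (1/\<sigma>\<^sup>2) * (normal_density \<mu> \<sigma> y * ((y-\<mu>) * g y))) = f"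
      using \<sigma> by (auto simp: f_def fun_eq_iff field_simps)
    finally show ?thesis .
  qed
  have Fd: "((\<lambda>y. g y * normal_density \<mu> \<sigma> y) has_vector_derivative f y) (at y)" for y
    unfolding has_real_derivative_iff_has_vector_derivative[symmetric] f_def
    by (rule DERIV_mult[OF der nd_deriv[OF \<sigma>], THEN DERIV_cong]) simp
  have fc: "isCont f y" for y
  proof -
    have "isCont (\<lambda>y. normal_density \<mu> \<sigma> y) y"
      using nd_deriv[OF \<sigma>] by (rule DERIV_isCont)
    moreover have "isCont g' y" "isCont g y"
      using cont contg by (auto simp: continuous_on_eq_continuous_at)
    ultimately show ?thesis unfolding f_def using \<sigma> by (intro continuous_intros) auto
  qed
  have lim: "((\<lambda>y. g y * normal_density \<mu> \<sigma> y) \<longlongrightarrow> 0) F"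
    if "(normal_density \<mu> \<sigma> \<longlongrightarrow> 0) F" for F
  proof (rule Lim_null_comparison)
    show "\<forall>\<^sub>F x in F. norm (g x * normal_density \<mu> \<sigma> x) \<le> B * normal_density \<mu> \<sigma> x"
      using bg by (auto simp: abs_mult intro!: always_eventually mult_right_mono)
    show "((\<lambda>x. B * normal_density \<mu> \<sigma> x) \<longlongrightarrow> 0) F"
      using tendsto_mult_left[OF that, of B] by simp
  qed
  have "(LBINT y=-\<infinity>..\<infinity>. f y) = 0 - 0"
    apply (rule interval_integral_FTC_integrable[where F="\<lambda>y. g y * normal_density \<mu> \<sigma> y"])
    using Fd fc fint lim[OF nd_tendsto_top[OF \<sigma>]] lim[OF nd_tendsto_bot[OF \<sigma>]]
    by (auto simp: ereal_tendsto_simps1 set_integrable_def)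
  then have "integral\<^sup>L lborel f = 0"
    by (simp add: interval_lebesgue_integral_def set_lebesgue_integral_def)
  moreover have "integral\<^sup>L lborel f = (\<integral>y. normal_density \<mu> \<sigma> y * g' y \<partial>lborel) - (1/\<sigma>\<^sup>2) * (\<integral>y. normal_density \<mu> \<sigma> y * ((y-\<mu>) * g y) \<partial>lborel)"
  proof -
    have "f = (\<lambda>y. normal_density \<mu> \<sigma> y * g' y - (1/\<sigma>\<^sup>2) * (normal_density \<mu> \<sigma> y * ((y-\<mu>) * g y)))"
      using \<sigma> by (auto simp: f_def fun_eq_iff field_simps)
    then show ?thesis using i1 i2 by simp
  qed
  ultimately show "(\<integral>y. normal_density \<mu> \<sigma> y * ((y-\<mu>) * g y) \<partial>lborel)
          = \<sigma>\<^sup>2 * (\<integral>y. normal_density \<mu> \<sigma> y * g' y \<partial>lborel)"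
    using \<sigma> by (simp add: field_simps)
qed




definition NM :: "(nat \<Rightarrow> real) \<Rightarrow> (nat \<Rightarrow> real) \<Rightarrow> nat \<Rightarrow> real measure" where
  "NM \<theta> s k = density lborel (normal_density (\<theta> k) (s k))"

lemma NM_prob: "s k > 0 \<Longrightarrow> prob_space (NM \<theta> s k)"
  unfolding NM_def by (rule prob_space_normal_density)

lemma NM_space[simp]: "space (NM \<theta> s k) = UNIV" by (simp add: NM_def)
lemma NM_sets[simp]: "sets (NM \<theta> s k) = sets borel" by (simp add: NM_def)
lemma NM_meas_cong[measurable_cong]: "sets (NM \<theta> s k) = sets borel" by simp

lemma comp_integral:
  fixes f :: "real \<Rightarrow> real"
  assumes s: "\<And>k. s k > 0" and j: "j \<in> I" and f[measurable]: "f \<in> borel_measurable borel"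
    and fi: "integrable lborel (\<lambda>y. normal_density (\<theta> j) (s j) y * f y)"
  shows "integrable (PiM I (NM \<theta> s)) (\<lambda>x. f (x j))"
    and "integral\<^sup>L (PiM I (NM \<theta> s)) (\<lambda>x. f (x j)) = (\<integral>y. normal_density (\<theta> j) (s j) y * f y \<partial>lborel)"
proof -
  have D: "distr (PiM I (NM \<theta> s)) (NM \<theta> s j) (\<lambda>x. x j) = NM \<theta> s j"
    by (rule distr_PiM_component[OF NM_prob[OF s] j])
  have i1: "integrable (NM \<theta> s j) f"
    unfolding NM_def using fi by (subst integrable_density) auto
  have "integrable (distr (PiM I (NM \<theta> s)) (NM \<theta> s j) (\<lambda>x. x j)) f" using D i1 by simp
  then show "integrable (PiM I (NM \<theta> s)) (\<lambda>x. f (x j))"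
    by (subst (asm) integrable_distr_eq) (auto intro: measurable_component_singleton j)
  have "integral\<^sup>L (PiM I (NM \<theta> s)) (\<lambda>x. f (x j)) = integral\<^sup>L (distr (PiM I (NM \<theta> s)) (NM \<theta> s j) (\<lambda>x. x j)) f"
    by (subst integral_distr) (auto intro: measurable_component_singleton j)
  also have "\<dots> = integral\<^sup>L (NM \<theta> s j) f" using D by simp
  also have "\<dots> = (\<integral>y. normal_density (\<theta> j) (s j) y * f y \<partial>lborel)"
    unfolding NM_def by (subst integral_density) auto
  finally show "integral\<^sup>L (PiM I (NM \<theta> s)) (\<lambda>x. f (x j)) = (\<integral>y. normal_density (\<theta> j) (s j) y * f y \<partial>lborel)" .
qed

lemma second_moment:
  assumes s: "\<And>k. s k > 0" and j: "j \<in> I"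
  shows "integrable (PiM I (NM \<theta> s)) (\<lambda>x. (x j - \<theta> j)\<^sup>2)"
    and "integral\<^sup>L (PiM I (NM \<theta> s)) (\<lambda>x. (x j - \<theta> j)\<^sup>2) = (s j)\<^sup>2"
proof -
  have fi: "integrable lborel (\<lambda>y. normal_density (\<theta> j) (s j) y * (y - \<theta> j)\<^sup>2)"
    using integrable_normal_moment[OF s[of j], where \<mu>="\<theta> j" and k=2] by simp
  show "integrable (PiM I (NM \<theta> s)) (\<lambda>x. (x j - \<theta> j)\<^sup>2)"
    by (rule comp_integral(1)[where s=s and \<theta>=\<theta>, OF s j _ fi]) measurable
  have "(\<integral>y. normal_density (\<theta> j) (s j) y * (y - \<theta> j)\<^sup>2 \<partial>lborel) = (s j)\<^sup>2"
  proof -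
    have "(\<integral>y. normal_density (\<theta> j) (s j) y * (y - \<theta> j)\<^sup>2 \<partial>lborel) = 2 / (2 / (s j)\<^sup>2)"
      using integral_normal_moment_even[OF s[of j], where \<mu>="\<theta> j" and k=1] by simp
    also have "\<dots> = (s j)\<^sup>2" using s[of j] by simp
    finally show ?thesis .
  qed
  then show "integral\<^sup>L (PiM I (NM \<theta> s)) (\<lambda>x. (x j - \<theta> j)\<^sup>2) = (s j)\<^sup>2"
    by (subst comp_integral(2)[where s=s and \<theta>=\<theta>, OF s j _ fi]) auto
qed

lemma abs_first_moment:
  assumes s: "\<And>k. s k > 0" and j: "j \<in> I"
  shows "integrable (PiM I (NM \<theta> s)) (\<lambda>x. \<bar>x j - \<theta> j\<bar>)"
proof -
  have fi: "integrable lborel (\<lambda>y. normal_density (\<theta> j) (s j) y * \<bar>y - \<theta> j\<bar>)"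
    using integrable_normal_moment_abs[OF s[of j], where \<mu>="\<theta> j" and k=1] by simp
  show ?thesis by (rule comp_integral(1)[where s=s and \<theta>=\<theta>, OF s j _ fi]) measurable
qed


definition gg :: "real \<Rightarrow> real \<Rightarrow> real \<Rightarrow> real" where
  "gg a r y = a * y / ((a * y)\<^sup>2 + r)"
definition gg' :: "real \<Rightarrow> real \<Rightarrow> real \<Rightarrow> real" where
  "gg' a r y = a / ((a * y)\<^sup>2 + r) - 2 * a^3 * y\<^sup>2 / ((a * y)\<^sup>2 + r)\<^sup>2"

lemma gg_deriv: assumes "r > 0" shows "(gg a r has_real_derivative gg' a r y) (at y)"
proof -
  have pos: "(a * y)\<^sup>2 + r > 0" using assms by (simp add: add_nonneg_pos)
  have "((\<lambda>y. a * y / ((a * y)\<^sup>2 + r)) has_real_derivative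
      (a * ((a * y)\<^sup>2 + r) - a * y * (2 * a * (a * y))) / ((a * y)\<^sup>2 + r)\<^sup>2) (at y)"
    using pos by (auto intro!: derivative_eq_intros simp: power2_eq_square)
  moreover have "(a * ((a * y)\<^sup>2 + r) - a * y * (2 * a * (a * y))) / ((a * y)\<^sup>2 + r)\<^sup>2 = gg' a r y"
  proof -
    define D where "D = (a * y)\<^sup>2 + r"
    have D: "D > 0" using pos by (simp add: D_def)
    have "a * y * (2 * a * (a * y)) = 2*a^3*y\<^sup>2" by (simp add: power2_eq_square power3_eq_cube)
    then have "(a * D - a * y * (2 * a * (a * y))) / D\<^sup>2 = a * D / D\<^sup>2 - 2*a^3*y\<^sup>2 / D\<^sup>2"
      by (simp add: diff_divide_distrib)
    also have "a * D / D\<^sup>2 = a / D" using D by (simp add: power2_eq_square)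
    finally show ?thesis unfolding gg'_def D_def by simp
  qed
  ultimately show ?thesis unfolding gg_def[abs_def] by simp
qed

lemma gg_bound: assumes "0 < e" "e \<le> r" shows "\<bar>gg a r y\<bar> \<le> 1 + 1/e"
proof -
  have pos: "(a * y)\<^sup>2 + r > 0" using assms by (simp add: add_nonneg_pos)
  have "\<bar>a * y\<bar> \<le> (a * y)\<^sup>2 + 1"
  proof -
    have "0 \<le> (\<bar>a*y\<bar> - 1)\<^sup>2" by simp
    also have "(\<bar>a*y\<bar> - 1)\<^sup>2 = (a*y)\<^sup>2 - 2 * \<bar>a*y\<bar> + 1"
      by (simp add: power2_eq_square algebra_simps abs_mult_self_eq)
    finally show ?thesis by (smt (verit) abs_ge_zero)
  qed
  also have "\<dots> \<le> ((a * y)\<^sup>2 + r) * (1 + 1/e)"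
  proof -
    have "(a*y)\<^sup>2 / e \<ge> 0" "r / e \<ge> 1" using assms by auto
    then have "((a * y)\<^sup>2 + r) * (1 + 1/e) = (a * y)\<^sup>2 + r + (a*y)\<^sup>2 / e + r / e"
      using assms by (simp add: field_simps)
    then show ?thesis using \<open>(a*y)\<^sup>2 / e \<ge> 0\<close> \<open>r / e \<ge> 1\<close> assms by linarith
  qed
  finally have "\<bar>a * y\<bar> / ((a * y)\<^sup>2 + r) \<le> 1 + 1/e"
    using pos by (simp add: divide_le_eq mult.commute)
  then show ?thesis unfolding gg_def using pos by (simp add: abs_divide)
qed

lemma gg'_bound: assumes "0 < e" "e \<le> r" "a > 0" shows "\<bar>gg' a r y\<bar> \<le> 3 * a / e"
proof -
  define u where "u = (a * y)\<^sup>2"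
  have u: "u \<ge> 0" by (simp add: u_def)
  have pos: "u + r > 0" using assms u by linarith
  have t1: "a / (u + r) \<le> a / e" using assms u by (intro divide_left_mono) auto
  have t2: "2 * a^3 * y\<^sup>2 / (u + r)\<^sup>2 \<le> 2 * a / e"
  proof -
    have eq: "2 * a^3 * y\<^sup>2 / (u + r)\<^sup>2 = (2 * a) * (u / (u + r)) * (1 / (u + r))"
      using pos by (simp add: u_def power2_eq_square power3_eq_cube field_simps)
    have "u / (u + r) \<le> 1" using pos u assms by simp
    moreover have "1 / (u + r) \<le> 1 / e" using assms u by (intro divide_left_mono) auto
    ultimately have "(2 * a) * (u / (u + r)) * (1 / (u + r)) \<le> (2 * a) * 1 * (1 / e)"
      using assms u pos by (intro mult_mono) auto
    then show ?thesis using eq by simp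
  qed
  have n1: "a / (u + r) \<ge> 0" "2 * a^3 * y\<^sup>2 / (u + r)\<^sup>2 \<ge> 0" using assms pos by auto
  have "\<bar>gg' a r y\<bar> \<le> a / (u + r) + 2 * a^3 * y\<^sup>2 / (u + r)\<^sup>2"
    unfolding gg'_def u_def[symmetric] using n1 by linarith
  moreover have "a / e + 2 * a / e = 3 * a / e" by (simp add: field_simps)
  ultimately show ?thesis using t1 t2 by linarith
qed

lemma gg'_cont: assumes "r > 0" shows "continuous_on UNIV (gg' a r)"
proof -
  have "\<And>y. (a * y)\<^sup>2 + r \<noteq> 0" using assms by (metis add_nonneg_pos not_less_iff_gr_or_eq zero_le_power2)
  then show ?thesis unfolding gg'_def[abs_def] by (intro continuous_intros) auto
qed




lemma product_sf_NM: assumes "\<And>k. s k > 0" shows "product_sigma_finite (NM \<theta> s)"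
  unfolding product_sigma_finite_def
proof
  fix i show "sigma_finite_measure (NM \<theta> s i)"
    using NM_prob[of s i \<theta>] assms[of i] by (simp add: prob_space_imp_sigma_finite)
qed

lemma stein_prod:
  fixes a s \<theta> :: "nat \<Rightarrow> real" and e :: real
  assumes s: "\<And>k. s k > 0" and fin: "finite I" and j: "j \<in> I" and e: "e > 0" and aj: "a j > 0"
  defines "rr \<equiv> \<lambda>x. (\<Sum>k\<in>I-{j}. (a k * x k)\<^sup>2) + e"
  shows "integrable (PiM I (NM \<theta> s)) (\<lambda>x. (x j - \<theta> j) * gg (a j) (rr x) (x j))"
    and "integrable (PiM I (NM \<theta> s)) (\<lambda>x. gg' (a j) (rr x) (x j))"
    and "integral\<^sup>L (PiM I (NM \<theta> s)) (\<lambda>x. (x j - \<theta> j) * gg (a j) (rr x) (x j))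
         = (s j)\<^sup>2 * integral\<^sup>L (PiM I (NM \<theta> s)) (\<lambda>x. gg' (a j) (rr x) (x j))"
proof -
  interpret product_sigma_finite "NM \<theta> s" by (rule product_sf_NM[OF s])
  interpret P: prob_space "PiM I (NM \<theta> s)" by (rule prob_space_PiM) (rule NM_prob, rule s)
  have rr_ge: "rr x \<ge> e" for x unfolding rr_def by (simp add: sum_nonneg)
  have rr_pos: "rr x > 0" for x using rr_ge[of x] e by linarith
  have Ij: "j \<in> I" by (rule j)
  have mrr[measurable]: "rr \<in> borel_measurable (PiM I (NM \<theta> s))"
    unfolding rr_def using Ij by measurable
  have m1[measurable]: "(\<lambda>x. (x j - \<theta> j) * gg (a j) (rr x) (x j)) \<in> borel_measurable (PiM I (NM \<theta> s))"
    unfolding gg_def using Ij by measurable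
  have m2[measurable]: "(\<lambda>x. gg' (a j) (rr x) (x j)) \<in> borel_measurable (PiM I (NM \<theta> s))"
    unfolding gg'_def using Ij by measurable
  show i1: "integrable (PiM I (NM \<theta> s)) (\<lambda>x. (x j - \<theta> j) * gg (a j) (rr x) (x j))"
  proof (rule Bochner_Integration.integrable_bound)
    show "integrable (PiM I (NM \<theta> s)) (\<lambda>x. (1 + 1/e) * \<bar>x j - \<theta> j\<bar>)"
      using abs_first_moment[where s=s and \<theta>=\<theta>, OF s j] by simp
    show "AE x in PiM I (NM \<theta> s). norm ((x j - \<theta> j) * gg (a j) (rr x) (x j)) \<le> norm ((1 + 1/e) * \<bar>x j - \<theta> j\<bar>)"
    proof (intro AE_I2)
      fix x
      have "\<bar>x j - \<theta> j\<bar> * \<bar>gg (a j) (rr x) (x j)\<bar> \<le> \<bar>x j - \<theta> j\<bar> * (1 + 1/e)"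
        by (intro mult_left_mono gg_bound[OF e rr_ge]) auto
      then show "norm ((x j - \<theta> j) * gg (a j) (rr x) (x j)) \<le> norm ((1 + 1/e) * \<bar>x j - \<theta> j\<bar>)"
        using e by (simp add: abs_mult ac_simps)
    qed
  qed (rule m1)
  show i2: "integrable (PiM I (NM \<theta> s)) (\<lambda>x. gg' (a j) (rr x) (x j))"
    by (rule P.integrable_const_bound[where B="3 * a j / e"]) (auto intro: gg'_bound[OF e rr_ge aj])
  have Ieq: "insert j (I - {j}) = I" using j by auto
  have fin': "finite (I - {j})" "j \<notin> I - {j}" using fin by auto
  have rr_upd: "rr (x(j := y)) = rr x" for x y
    unfolding rr_def by (intro arg_cong2[where f="(+)"] sum.cong) auto
  have inner: "(\<integral>y. (y - \<theta> j) * gg (a j) (rr x) y \<partial>NM \<theta> s j) = (s j)\<^sup>2 * (\<integral>y. gg' (a j) (rr x) y \<partial>NM \<theta> s j)" for x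
  proof -
    have mg[measurable]: "gg (a j) (rr x) \<in> borel_measurable borel"
      unfolding gg_def[abs_def] by measurable
    have mg'[measurable]: "gg' (a j) (rr x) \<in> borel_measurable borel"
      unfolding gg'_def[abs_def] by measurable
    have "(\<integral>y. (y - \<theta> j) * gg (a j) (rr x) y \<partial>NM \<theta> s j)
       = (\<integral>y. normal_density (\<theta> j) (s j) y * ((y - \<theta> j) * gg (a j) (rr x) y) \<partial>lborel)"
      unfolding NM_def by (subst integral_density) auto
    also have "\<dots> = (s j)\<^sup>2 * (\<integral>y. normal_density (\<theta> j) (s j) y * gg' (a j) (rr x) y \<partial>lborel)"
      by (rule stein_1d(3)[OF s[of j] gg_deriv[OF rr_pos] gg'_cont[OF rr_pos], where B="max (1 + 1/e) (3 * a j / e)"])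
         (auto intro: order_trans[OF gg_bound[OF e rr_ge]] order_trans[OF gg'_bound[OF e rr_ge aj]])
    also have "(\<integral>y. normal_density (\<theta> j) (s j) y * gg' (a j) (rr x) y \<partial>lborel) = (\<integral>y. gg' (a j) (rr x) y \<partial>NM \<theta> s j)"
      unfolding NM_def by (subst integral_density) auto
    finally show ?thesis .
  qed
  have "integral\<^sup>L (PiM I (NM \<theta> s)) (\<lambda>x. (x j - \<theta> j) * gg (a j) (rr x) (x j))
      = (\<integral>x. (\<integral>y. (\<lambda>x. (x j - \<theta> j) * gg (a j) (rr x) (x j)) (x(j:=y)) \<partial>NM \<theta> s j) \<partial>PiM (I - {j}) (NM \<theta> s))"
    using product_integral_insert[OF fin', of "\<lambda>x. (x j - \<theta> j) * gg (a j) (rr x) (x j)"] i1 unfolding Ieq by simp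
  also have "\<dots> = (\<integral>x. (s j)\<^sup>2 * (\<integral>y. gg' (a j) (rr x) y \<partial>NM \<theta> s j) \<partial>PiM (I - {j}) (NM \<theta> s))"
    by (intro Bochner_Integration.integral_cong refl) (simp add: rr_upd inner)
  also have "\<dots> = (s j)\<^sup>2 * (\<integral>x. (\<integral>y. (\<lambda>x. gg' (a j) (rr x) (x j)) (x(j:=y)) \<partial>NM \<theta> s j) \<partial>PiM (I - {j}) (NM \<theta> s))"
    by (simp add: rr_upd)
  also have "(\<integral>x. (\<integral>y. (\<lambda>x. gg' (a j) (rr x) (x j)) (x(j:=y)) \<partial>NM \<theta> s j) \<partial>PiM (I - {j}) (NM \<theta> s))
     = integral\<^sup>L (PiM I (NM \<theta> s)) (\<lambda>x. gg' (a j) (rr x) (x j))"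
    using product_integral_insert[OF fin', of "\<lambda>x. gg' (a j) (rr x) (x j)"] i2 unfolding Ieq by simp
  finally show "integral\<^sup>L (PiM I (NM \<theta> s)) (\<lambda>x. (x j - \<theta> j) * gg (a j) (rr x) (x j))
         = (s j)\<^sup>2 * integral\<^sup>L (PiM I (NM \<theta> s)) (\<lambda>x. gg' (a j) (rr x) (x j))" .
qed




lemma sq_expand: "((u::real) - c * v)\<^sup>2 = u\<^sup>2 - 2 * c * (u * v) + c\<^sup>2 * v\<^sup>2"
  by (simp add: power2_eq_square algebra_simps)

lemma pointwise_ineq:
  fixes I :: "nat set" and a d x \<theta> :: "nat \<Rightarrow> real" and c e m :: real
  assumes fin: "finite I" and e: "e > 0" and c0: "0 \<le> c"
    and dpos: "\<And>j. j \<in> I \<Longrightarrow> d j > 0" and apos: "\<And>j. j \<in> I \<Longrightarrow> a j > 0"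
    and mge: "\<And>j. j \<in> I \<Longrightarrow> d j * a j \<le> m"
    and cle: "c \<le> 2 * ((\<Sum>j\<in>I. d j * a j) - 2 * m)"
  defines "E \<equiv> (\<Sum>k\<in>I. (a k * x k)\<^sup>2) + e"
  shows "(\<Sum>j\<in>I. (x j - \<theta> j - c * (a j * x j / E))\<^sup>2)
     \<le> (\<Sum>j\<in>I. (x j - \<theta> j)\<^sup>2 - 2 * c * ((x j - \<theta> j) * (a j * x j / E))
            + 2 * c * (d j * (a j / E - 2 * a j ^ 3 * (x j)\<^sup>2 / E\<^sup>2)))"
proof -
  define R where "R = (\<Sum>k\<in>I. (a k * x k)\<^sup>2)"
  have R0: "R \<ge> 0" unfolding R_def by (simp add: sum_nonneg)
  have E: "E = R + e" unfolding E_def R_def ..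
  have Epos: "E > 0" using R0 e E by linarith
  have m0: "m \<ge> 0" if ne: "I \<noteq> {}"
  proof -
    obtain j where "j \<in> I" using ne by blast
    then show ?thesis using mge[of j] dpos[of j] apos[of j] by (smt (verit) mult_pos_pos)
  qed
  have expand: "(x j - \<theta> j - c * (a j * x j / E))\<^sup>2 =
        (x j - \<theta> j)\<^sup>2 - 2 * c * ((x j - \<theta> j) * (a j * x j / E)) + c\<^sup>2 * ((a j * x j)\<^sup>2 / E\<^sup>2)" for j
  proof -
    have "(x j - \<theta> j - c * (a j * x j / E))\<^sup>2 = (x j - \<theta> j)\<^sup>2 - 2 * c * ((x j - \<theta> j) * (a j * x j / E)) + c\<^sup>2 * (a j * x j / E)\<^sup>2"
      by (rule sq_expand)
    then show ?thesis by (simp add: power_divide)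
  qed
  have RE: "R / E\<^sup>2 \<le> 1 / E"
  proof -
    have "R / E\<^sup>2 \<le> E / E\<^sup>2" using Epos E e R0 by (intro divide_right_mono) auto
    also have "E / E\<^sup>2 = 1 / E" using Epos by (simp add: power2_eq_square)
    finally show ?thesis .
  qed
  have h_eq: "d j * (a j / E - 2 * a j ^ 3 * (x j)\<^sup>2 / E\<^sup>2) = d j * a j / E - 2 * (d j * a j) * (a j * x j)\<^sup>2 / E\<^sup>2" for j
    by (simp add: power2_eq_square power3_eq_cube field_simps)
  have key: "c\<^sup>2 * (\<Sum>j\<in>I. (a j * x j)\<^sup>2 / E\<^sup>2) \<le> 2 * c * (\<Sum>j\<in>I. d j * (a j / E - 2 * a j ^ 3 * (x j)\<^sup>2 / E\<^sup>2))"
  proof (cases "I = {}")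
    case True then show ?thesis by simp
  next
    case False
    have s1: "(\<Sum>j\<in>I. (a j * x j)\<^sup>2 / E\<^sup>2) = R / E\<^sup>2"
      unfolding R_def by (simp add: sum_divide_distrib)
    have "(\<Sum>j\<in>I. 2 * (d j * a j) * (a j * x j)\<^sup>2 / E\<^sup>2) \<le> (\<Sum>j\<in>I. 2 * m * (a j * x j)\<^sup>2 / E\<^sup>2)"
      using mge by (intro sum_mono divide_right_mono mult_right_mono) auto
    also have "\<dots> = 2 * m * R / E\<^sup>2" unfolding R_def by (simp add: sum_divide_distrib sum_distrib_left)
    also have "\<dots> \<le> 2 * m / E"
    proof -
      have "2 * m * (R / E\<^sup>2) \<le> 2 * m * (1 / E)" using RE m0[OF False] by (intro mult_left_mono) auto
      then show ?thesis by simp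
    qed
    finally have A: "(\<Sum>j\<in>I. 2 * (d j * a j) * (a j * x j)\<^sup>2 / E\<^sup>2) \<le> 2 * m / E" .
    have "(\<Sum>j\<in>I. d j * (a j / E - 2 * a j ^ 3 * (x j)\<^sup>2 / E\<^sup>2))
        = (\<Sum>j\<in>I. d j * a j) / E - (\<Sum>j\<in>I. 2 * (d j * a j) * (a j * x j)\<^sup>2 / E\<^sup>2)"
      by (simp add: h_eq sum_subtractf sum_divide_distrib)
    also have "\<dots> \<ge> (\<Sum>j\<in>I. d j * a j) / E - 2 * m / E" using A by linarith
    finally have B: "(\<Sum>j\<in>I. d j * (a j / E - 2 * a j ^ 3 * (x j)\<^sup>2 / E\<^sup>2)) \<ge> ((\<Sum>j\<in>I. d j * a j) - 2 * m) / E"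
      by (simp add: diff_divide_distrib)
    have "c\<^sup>2 * (R / E\<^sup>2) \<le> c\<^sup>2 * (1 / E)"
      using RE by (intro mult_left_mono) auto
    also have "c\<^sup>2 * (1/E) = c * c / E" by (simp add: power2_eq_square)
    also have "c * c / E \<le> c * (2 * ((\<Sum>j\<in>I. d j * a j) - 2 * m)) / E"
      using c0 cle Epos by (intro divide_right_mono mult_left_mono) auto
    also have "\<dots> = 2 * c * (((\<Sum>j\<in>I. d j * a j) - 2 * m) / E)" by simp
    also have "\<dots> \<le> 2 * c * (\<Sum>j\<in>I. d j * (a j / E - 2 * a j ^ 3 * (x j)\<^sup>2 / E\<^sup>2))"
      using B c0 by (intro mult_left_mono) auto
    finally show ?thesis using s1 by simp
  qed
  have "(\<Sum>j\<in>I. (x j - \<theta> j - c * (a j * x j / E))\<^sup>2)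
      = (\<Sum>j\<in>I. (x j - \<theta> j)\<^sup>2 - 2 * c * ((x j - \<theta> j) * (a j * x j / E))) + c\<^sup>2 * (\<Sum>j\<in>I. (a j * x j)\<^sup>2 / E\<^sup>2)"
    by (simp only: expand sum.distrib sum_distrib_left)
  also have "\<dots> \<le> (\<Sum>j\<in>I. (x j - \<theta> j)\<^sup>2 - 2 * c * ((x j - \<theta> j) * (a j * x j / E)))
        + 2 * c * (\<Sum>j\<in>I. d j * (a j / E - 2 * a j ^ 3 * (x j)\<^sup>2 / E\<^sup>2))"
    using key by linarith
  also have "\<dots> = (\<Sum>j\<in>I. (x j - \<theta> j)\<^sup>2 - 2 * c * ((x j - \<theta> j) * (a j * x j / E))
            + 2 * c * (d j * (a j / E - 2 * a j ^ 3 * (x j)\<^sup>2 / E\<^sup>2)))"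
    by (simp add: sum.distrib sum_distrib_left)
  finally show ?thesis .
qed


lemma risk_eps:
  fixes a s \<theta> :: "nat \<Rightarrow> real" and e c m :: real
  assumes s: "\<And>k. s k > 0" and fin: "finite I" and e: "e > 0" and c0: "0 \<le> c"
    and apos: "\<And>j. j \<in> I \<Longrightarrow> a j > 0"
    and mge: "\<And>j. j \<in> I \<Longrightarrow> (s j)\<^sup>2 * a j \<le> m"
    and cle: "c \<le> 2 * ((\<Sum>j\<in>I. (s j)\<^sup>2 * a j) - 2 * m)"
  shows "(\<integral>\<^sup>+x. ennreal (\<Sum>j\<in>I. (x j - \<theta> j - c / ((\<Sum>k\<in>I. (a k * x k)\<^sup>2) + e) * (a j * x j))\<^sup>2) \<partial>PiM I (NM \<theta> s))
     \<le> ennreal (\<Sum>j\<in>I. (s j)\<^sup>2)"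
proof -
  let ?P = "PiM I (NM \<theta> s)"
  interpret P: prob_space ?P by (rule prob_space_PiM) (rule NM_prob, rule s)
  define E where "E x = (\<Sum>k\<in>I. (a k * x k)\<^sup>2) + e" for x
  define rr where "rr j x = (\<Sum>k\<in>I-{j}. (a k * x k)\<^sup>2) + e" for j x
  have E_pos: "E x > 0" for x unfolding E_def using e by (smt (verit) sum_nonneg zero_le_power2)
  have Err: "E x = (a j * x j)\<^sup>2 + rr j x" if "j \<in> I" for j x
    unfolding E_def rr_def using that fin by (simp add: sum.remove)
  have gg_eq: "gg (a j) (rr j x) (x j) = a j * x j / E x" if "j \<in> I" for j x
    unfolding gg_def using Err[OF that] by simp
  have gg'_eq: "gg' (a j) (rr j x) (x j) = a j / E x - 2 * a j ^ 3 * (x j)\<^sup>2 / (E x)\<^sup>2" if "j \<in> I" for j x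
    unfolding gg'_def using Err[OF that] by simp
  have rr_ge: "rr j x \<ge> e" for j x unfolding rr_def by (simp add: sum_nonneg)
  note SP = stein_prod[where s=s and \<theta>=\<theta>, OF s fin _ e, of _ a]
  define F where "F x = (\<Sum>j\<in>I. (x j - \<theta> j - c * gg (a j) (rr j x) (x j))\<^sup>2)" for x
  define G where "G x = (\<Sum>j\<in>I. (x j - \<theta> j)\<^sup>2 - 2 * c * ((x j - \<theta> j) * gg (a j) (rr j x) (x j))
            + 2 * c * ((s j)\<^sup>2 * gg' (a j) (rr j x) (x j)))" for x
  have SP1: "integrable ?P (\<lambda>x. (x j - \<theta> j) * gg (a j) (rr j x) (x j))" if "j \<in> I" for j
    using SP(1)[OF that apos[OF that]] unfolding rr_def by simp
  have SP2: "integrable ?P (\<lambda>x. gg' (a j) (rr j x) (x j))" if "j \<in> I" for j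
    using SP(2)[OF that apos[OF that]] unfolding rr_def by simp
  have SP3: "integral\<^sup>L ?P (\<lambda>x. (x j - \<theta> j) * gg (a j) (rr j x) (x j)) = (s j)\<^sup>2 * integral\<^sup>L ?P (\<lambda>x. gg' (a j) (rr j x) (x j))" if "j \<in> I" for j
    using SP(3)[OF that apos[OF that]] unfolding rr_def by simp
  have SM1: "integrable ?P (\<lambda>x. (x j - \<theta> j)\<^sup>2)" "integral\<^sup>L ?P (\<lambda>x. (x j - \<theta> j)\<^sup>2) = (s j)\<^sup>2" if "j \<in> I" for j
    using second_moment[where s=s and \<theta>=\<theta>, OF s that] by auto
  have mgg[measurable]: "(\<lambda>x. gg (a j) (rr j x) (x j)) \<in> borel_measurable ?P" if "j \<in> I" for j
    unfolding gg_def rr_def using that by measurable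
  have Gint: "integrable ?P G"
    unfolding G_def using SP1 SP2 SM1 by (intro Bochner_Integration.integrable_sum Bochner_Integration.integrable_add Bochner_Integration.integrable_diff Bochner_Integration.integrable_mult_right) auto
  have Gval: "integral\<^sup>L ?P G = (\<Sum>j\<in>I. (s j)\<^sup>2)"
  proof -
    have "integral\<^sup>L ?P G = (\<Sum>j\<in>I. integral\<^sup>L ?P (\<lambda>x. (x j - \<theta> j)\<^sup>2 - 2 * c * ((x j - \<theta> j) * gg (a j) (rr j x) (x j))
            + 2 * c * ((s j)\<^sup>2 * gg' (a j) (rr j x) (x j))))"
      unfolding G_def using SP1 SP2 SM1 by (intro Bochner_Integration.integral_sum) auto
    also have "\<dots> = (\<Sum>j\<in>I. (s j)\<^sup>2)"
    proof (intro sum.cong refl)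
      fix j assume j: "j \<in> I"
      show "integral\<^sup>L ?P (\<lambda>x. (x j - \<theta> j)\<^sup>2 - 2 * c * ((x j - \<theta> j) * gg (a j) (rr j x) (x j))
            + 2 * c * ((s j)\<^sup>2 * gg' (a j) (rr j x) (x j))) = (s j)\<^sup>2"
        using SP1[OF j] SP2[OF j] SM1[OF j] SP3[OF j] by simp
    qed
    finally show ?thesis .
  qed
  have gsq: "integrable ?P (\<lambda>x. (gg (a j) (rr j x) (x j))\<^sup>2)" if j: "j \<in> I" for j
  proof (rule P.integrable_const_bound[where B="(1 + 1/e)\<^sup>2"])
    show "AE x in ?P. norm ((gg (a j) (rr j x) (x j))\<^sup>2) \<le> (1 + 1/e)\<^sup>2"
    proof (intro AE_I2)
      fix x
      have "\<bar>gg (a j) (rr j x) (x j)\<bar> \<le> 1 + 1/e" by (rule gg_bound[OF e rr_ge])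
      then have "\<bar>gg (a j) (rr j x) (x j)\<bar>\<^sup>2 \<le> (1 + 1/e)\<^sup>2" by (intro power_mono) auto
      then show "norm ((gg (a j) (rr j x) (x j))\<^sup>2) \<le> (1 + 1/e)\<^sup>2" by simp
    qed
  qed (use j in measurable)
  have Fexp: "F x = (\<Sum>j\<in>I. (x j - \<theta> j)\<^sup>2 - 2 * c * ((x j - \<theta> j) * gg (a j) (rr j x) (x j)) + c\<^sup>2 * (gg (a j) (rr j x) (x j))\<^sup>2)" for x
    unfolding F_def by (intro sum.cong refl) (simp add: power2_eq_square algebra_simps)
  have Fint: "integrable ?P F"
    unfolding Fexp[abs_def] using SP1 SM1 gsq by (intro Bochner_Integration.integrable_sum Bochner_Integration.integrable_add Bochner_Integration.integrable_diff Bochner_Integration.integrable_mult_right) auto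
  have FG: "F x \<le> G x" for x
  proof -
    have "F x = (\<Sum>j\<in>I. (x j - \<theta> j - c * (a j * x j / E x))\<^sup>2)"
      unfolding F_def by (intro sum.cong refl) (simp add: gg_eq)
    also have "\<dots> \<le> (\<Sum>j\<in>I. (x j - \<theta> j)\<^sup>2 - 2 * c * ((x j - \<theta> j) * (a j * x j / E x))
            + 2 * c * ((s j)\<^sup>2 * (a j / E x - 2 * a j ^ 3 * (x j)\<^sup>2 / (E x)\<^sup>2)))"
      unfolding E_def
      by (rule pointwise_ineq[OF fin e c0 _ apos mge cle]) (use s in \<open>auto simp: less_imp_neq[OF s, symmetric]\<close>)
    also have "\<dots> = G x"
      unfolding G_def by (intro sum.cong refl) (simp add: gg_eq gg'_eq)
    finally show ?thesis .
  qed
  have Fnn: "F x \<ge> 0" for x unfolding F_def by (simp add: sum_nonneg)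
  have eqF: "(\<Sum>j\<in>I. (x j - \<theta> j - c / ((\<Sum>k\<in>I. (a k * x k)\<^sup>2) + e) * (a j * x j))\<^sup>2) = F x" for x
    unfolding F_def by (intro sum.cong refl) (simp add: gg_eq E_def)
  have "(\<integral>\<^sup>+x. ennreal (F x) \<partial>?P) = ennreal (integral\<^sup>L ?P F)"
    using Fint Fnn by (intro nn_integral_eq_integral) auto
  also have "\<dots> \<le> ennreal (integral\<^sup>L ?P G)"
    using Fint Gint FG by (intro ennreal_leI integral_mono) auto
  finally have "(\<integral>\<^sup>+x. ennreal (F x) \<partial>?P) \<le> ennreal (\<Sum>j\<in>I. (s j)\<^sup>2)" unfolding Gval .
  moreover have "(\<integral>\<^sup>+x. ennreal (F x) \<partial>?P) = (\<integral>\<^sup>+x. ennreal (\<Sum>j\<in>I. (x j - \<theta> j - c / ((\<Sum>k\<in>I. (a k * x k)\<^sup>2) + e) * (a j * x j))\<^sup>2) \<partial>?P)"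
    by (intro nn_integral_cong) (simp only: eqF)
  ultimately show ?thesis by simp
qed




lemma minimax_general:
  fixes p :: nat and d a :: "nat \<Rightarrow> real" and c :: real
  assumes dpos: "\<forall>j\<in>{1..p}. d j > 0" and apos: "\<forall>j\<in>{1..p}. a j > 0"
    and c0: "0 \<le> c" and cle: "c \<le> 2 * ((\<Sum>j=1..p. d j * a j) - 2 * Max ((\<lambda>j. d j * a j) ` {1..p}))"
  shows "minimax p d (\<lambda>x. delta_est p c a x)"
  unfolding minimax_def
proof
  fix \<theta> :: "nat \<Rightarrow> real"
  define s where "s j = sqrt (if j \<in> {1..p} then d j else 1)" for j
  have s: "s k > 0" for k using dpos unfolding s_def by auto
  have sd: "(s j)\<^sup>2 = d j" if "j \<in> {1..p}" for j
  proof -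
    have "d j > 0" using that dpos by blast
    then show ?thesis using that unfolding s_def by simp
  qed
  have PI: "normal_diag p \<theta> d = PiM {1..p} (NM \<theta> s)"
    unfolding normal_diag_def NM_def s_def by (intro PiM_cong) auto
  define m where "m = Max ((\<lambda>j. d j * a j) ` {1..p})"
  have mge: "(s j)\<^sup>2 * a j \<le> m" if "j \<in> {1..p}" for j
    unfolding m_def sd[OF that] using that by (intro Max_ge) auto
  have cle': "c \<le> 2 * ((\<Sum>j\<in>{1..p}. (s j)\<^sup>2 * a j) - 2 * m)"
    using cle unfolding m_def by (simp add: sd)
  define R where "R x = (\<Sum>k\<in>{1..p}. (a k * x k)\<^sup>2)" for x :: "nat \<Rightarrow> real"
  define ee where "ee n = 1 / (real n + 1)" for n :: nat
  have ee: "ee n > 0" for n unfolding ee_def by simp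
  have ee_lim: "ee \<longlonglongrightarrow> 0" unfolding ee_def using LIMSEQ_inverse_real_of_nat_add[of 0]
    by (simp add: inverse_eq_divide add.commute)
  define u where "u n x = ennreal (\<Sum>j\<in>{1..p}. (x j - \<theta> j - c / (R x + ee n) * (a j * x j))\<^sup>2)" for n x
  define F where "F x = ennreal (\<Sum>j\<in>{1..p}. (delta_est p c a x j - \<theta> j)\<^sup>2)" for x
  have ubound: "integral\<^sup>N (normal_diag p \<theta> d) (u n) \<le> ennreal (\<Sum>j\<in>{1..p}. d j)" for n
  proof -
    have "integral\<^sup>N (normal_diag p \<theta> d) (u n) \<le> ennreal (\<Sum>j\<in>{1..p}. (s j)\<^sup>2)"
      unfolding PI u_def R_def
      by (rule risk_eps[OF s _ ee c0 _ mge cle']) (use apos in auto)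
    also have "(\<Sum>j\<in>{1..p}. (s j)\<^sup>2) = (\<Sum>j\<in>{1..p}. d j)" by (simp add: sd)
    finally show ?thesis .
  qed
  have conv: "(\<lambda>n. u n x) \<longlonglongrightarrow> F x" for x
  proof -
    have t: "(\<lambda>n. c / (R x + ee n) * (a j * x j)) \<longlonglongrightarrow> c / R x * (a j * x j)" if j: "j \<in> {1..p}" for j
    proof (cases "R x = 0")
      case True
      have "(a j * x j)\<^sup>2 \<le> R x" unfolding R_def using j by (intro member_le_sum) auto
      then have z: "a j * x j = 0" using True by simp
      show ?thesis unfolding z by simp
    next
      case False
      have "(\<lambda>n. R x + ee n) \<longlonglongrightarrow> R x + 0" by (intro tendsto_intros ee_lim)
      then show ?thesis using False by (auto intro!: tendsto_intros)
    qed
    have "(\<lambda>n. \<Sum>j\<in>{1..p}. (x j - \<theta> j - c / (R x + ee n) * (a j * x j))\<^sup>2) \<longlonglongrightarrow>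
          (\<Sum>j\<in>{1..p}. (x j - \<theta> j - c / R x * (a j * x j))\<^sup>2)"
      by (intro tendsto_sum tendsto_power tendsto_diff tendsto_const t) 
    moreover have "(\<Sum>j\<in>{1..p}. (x j - \<theta> j - c / R x * (a j * x j))\<^sup>2) = (\<Sum>j\<in>{1..p}. (delta_est p c a x j - \<theta> j)\<^sup>2)"
      unfolding delta_est_def R_def by (intro sum.cong refl) (simp add: algebra_simps)
    ultimately show ?thesis unfolding u_def F_def by (intro tendsto_ennrealI) simp
  qed
  have um[measurable]: "u n \<in> borel_measurable (normal_diag p \<theta> d)" for n
    unfolding PI u_def R_def by measurable
  have "(\<integral>\<^sup>+ x. F x \<partial>normal_diag p \<theta> d) = (\<integral>\<^sup>+ x. liminf (\<lambda>n. u n x) \<partial>normal_diag p \<theta> d)"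
    by (intro nn_integral_cong lim_imp_Liminf[OF trivial_limit_sequentially conv, symmetric])
  also have "\<dots> \<le> liminf (\<lambda>n. integral\<^sup>N (normal_diag p \<theta> d) (u n))"
    by (rule nn_integral_liminf) simp
  also have "\<dots> \<le> limsup (\<lambda>n. integral\<^sup>N (normal_diag p \<theta> d) (u n))"
    by (rule Liminf_le_Limsup) simp
  also have "\<dots> \<le> ennreal (\<Sum>j\<in>{1..p}. d j)"
    by (rule Limsup_bounded) (rule always_eventually, rule allI, rule ubound)
  finally show "(\<integral>\<^sup>+ x. ennreal (\<Sum>j = 1..p. (delta_est p c a x j - \<theta> j)\<^sup>2) \<partial>normal_diag p \<theta> d) \<le> ennreal (\<Sum>j = 1..p. d j)"
    unfolding F_def .
qed




lemma sum_split_nat: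
  fixes f :: "nat \<Rightarrow> real"
  assumes "\<nu> \<le> p" shows "sum f {1..p} = sum f {1..\<nu>} + sum f {\<nu>+1..p}"
proof -
  have "{1..p} = {1..\<nu>} \<union> {\<nu>+1..p}" using assms by auto
  then show ?thesis by (simp add: sum.union_disjoint[symmetric] ivl_disj_int)
qed

lemma part_A:
  fixes p :: nat and d \<gamma> :: "nat \<Rightarrow> real"
  assumes p3: "p \<ge> 3"
    and dpos: "\<forall>j\<in>{1..p}. d j > 0"
    and gnn: "\<forall>j\<in>{1..p}. \<gamma> j \<ge> 0"
    and sorted: "\<forall>j. 1 \<le> j \<and> j < p \<longrightarrow>
                   (d j)\<^sup>2 / (d j + \<gamma> j) \<ge> (d (j+1))\<^sup>2 / (d (j+1) + \<gamma> (j+1))"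
  shows "\<exists>a. is_solution p d \<gamma> a
           \<and> (\<forall>b. is_solution p d \<gamma> b \<longrightarrow> (\<forall>j\<in>{1..p}. b j = a j))
           \<and> (let mx = Max ((\<lambda>j. d j * a j) ` {1..p});
                  \<nu> = Max {j\<in>{1..p}. d j * a j = mx};
                  S = (\<Sum>j=1..p. (d j)\<^sup>2 / (d j + \<gamma> j));
                  T = (\<Sum>k=1..\<nu>. (d k + \<gamma> k) / (d k)\<^sup>2);
                  M = (real \<nu> - 2)\<^sup>2 / T + (\<Sum>j=\<nu>+1..p. (d j)\<^sup>2 / (d j + \<gamma> j));
                  K = sqrt S * inverse (sqrt M)
              in \<nu> \<ge> 3
                 \<and> (\<forall>j\<in>{1..\<nu>}. d j * a j = d 1 * a 1)
                 \<and> (\<forall>j\<in>{\<nu>+1..p}. d 1 * a 1 > d j * a j)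
                 \<and> (\<forall>j\<in>{1..\<nu>}. a j = K * inverse T * (real \<nu> - 2) / d j)
                 \<and> (\<forall>j\<in>{\<nu>+1..p}. a j = K * (d j / (d j + \<gamma> j)))
                 \<and> cstar p d a = K * M
                 \<and> K * M > 0)
           \<and> (\<forall>j\<in>{1..p}. a j > 0) \<and> cstar p d a > 0"
proof -
  define w where "w j = (d j + \<gamma> j) / (d j)\<^sup>2" for j
  have dg: "d j + \<gamma> j > 0" if "j \<in> {1..p}" for j using dpos gnn that by (smt (verit))
  have wpos: "w j > 0" if "j \<in> {1..p}" for j
  proof -
    have "d j > 0" using dpos that by auto
    then show ?thesis unfolding w_def using dg[OF that] by simp
  qed
  have winv: "(d j)\<^sup>2 / (d j + \<gamma> j) = 1 / w j" if "j \<in> {1..p}" for j unfolding w_def by simp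
  have wmono1: "w j \<le> w (Suc j)" if "1 \<le> j" "j < p" for j
  proof -
    have "1 / w j \<ge> 1 / w (Suc j)" using sorted that winv[of j] winv[of "Suc j"] by auto
    moreover have "w j > 0" "w (Suc j) > 0" using wpos[of j] wpos[of "Suc j"] that by auto
    ultimately show ?thesis
    proof (rule_tac ccontr)
      assume h: "1 / w (Suc j) \<le> 1 / w j" "w j > 0" "w (Suc j) > 0" "\<not> w j \<le> w (Suc j)"
      then have "1 / w j < 1 / w (Suc j)" by (intro divide_strict_left_mono) auto
      then show False using h by simp
    qed
  qed
  have wmono: "w j \<le> w k" if "1 \<le> j" "j \<le> k" "k \<le> p" for j k
    using that(2,3)
  proof (induction k rule: dec_induct)
    case base then show ?case by simp
  next
    case (step k) then show ?case using wmono1[of k] that(1) by simp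
  qed
  define T where "T n = (\<Sum>k=1..n. w k)" for n
  have Tpos: "T n > 0" if "1 \<le> n" "n \<le> p" for n
    unfolding T_def using that wpos by (intro sum_pos) auto
  define N where "N = {n \<in> {3..p}. (real n - 2) * w n \<le> T n}"
  have T3: "T 3 = w 1 + w 2 + w 3" unfolding T_def by (simp add: numeral_3_eq_3 numeral_2_eq_2)
  have "3 \<in> N" unfolding N_def using p3 T3 wpos[of 1] wpos[of 2] by auto
  have finN: "finite N" unfolding N_def by simp
  define \<nu> where "\<nu> = Max N"
  have \<nu>N: "\<nu> \<in> N" unfolding \<nu>_def using finN \<open>3 \<in> N\<close> by (intro Max_in) auto
  have \<nu>3: "\<nu> \<ge> 3" and \<nu>p: "\<nu> \<le> p" and \<nu>w: "(real \<nu> - 2) * w \<nu> \<le> T \<nu>" using \<nu>N unfolding N_def by auto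
  have \<nu>next: "(real \<nu> - 2) * w (\<nu>+1) > T \<nu>" if "\<nu> < p"
  proof -
    have "\<nu> + 1 \<notin> N"
    proof
      assume "\<nu> + 1 \<in> N"
      then have "\<nu> + 1 \<le> \<nu>" unfolding \<nu>_def using finN by (intro Max_ge)
      then show False by simp
    qed
    then have "\<not> (real (\<nu>+1) - 2) * w (\<nu>+1) \<le> T (\<nu>+1)" unfolding N_def using that \<nu>3 by auto
    moreover have "T (\<nu>+1) = T \<nu> + w (\<nu>+1)" unfolding T_def by simp
    ultimately show ?thesis by (simp add: algebra_simps)
  qed
  have T\<nu>: "T \<nu> > 0" using Tpos \<nu>3 \<nu>p by auto
  have wle: "(real \<nu> - 2) * w j \<le> T \<nu>" if "j \<in> {1..\<nu>}" for j
  proof -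
    have "w j \<le> w \<nu>" using that \<nu>p by (intro wmono) auto
    then have "(real \<nu> - 2) * w j \<le> (real \<nu> - 2) * w \<nu>" using \<nu>3 by (intro mult_left_mono) auto
    then show ?thesis using \<nu>w by linarith
  qed
  have wgt: "(real \<nu> - 2) * w j > T \<nu>" if "j \<in> {\<nu>+1..p}" for j
  proof -
    have "w (\<nu>+1) \<le> w j" using that by (intro wmono) auto
    then have "(real \<nu> - 2) * w (\<nu>+1) \<le> (real \<nu> - 2) * w j" using \<nu>3 by (intro mult_left_mono) auto
    then show ?thesis using \<nu>next that by force
  qed
  define S where "S = (\<Sum>j=1..p. 1 / w j)"
  have Spos: "S > 0" unfolding S_def using wpos p3 by (intro sum_pos) auto
  define Q where "Q = (\<Sum>j=\<nu>+1..p. 1 / w j)"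
  have Q0: "Q \<ge> 0" unfolding Q_def
  proof (intro sum_nonneg)
    fix x assume "x \<in> {\<nu>+1..p}" then show "0 \<le> 1 / w x" using wpos[of x] by auto
  qed
  define M where "M = (real \<nu> - 2)\<^sup>2 / T \<nu> + Q"
  have Mpos: "M > 0"
  proof -
    have "real \<nu> - 2 > 0" using \<nu>3 by simp
    then have "(real \<nu> - 2)\<^sup>2 / T \<nu> > 0" using T\<nu> by simp
    then show ?thesis unfolding M_def using Q0 by linarith
  qed
  define K where "K = sqrt S * inverse (sqrt M)"
  have Kpos: "K > 0" unfolding K_def using Spos Mpos by simp
  have KKM: "K\<^sup>2 * M = S"
  proof -
    have "K\<^sup>2 = (sqrt S)\<^sup>2 * (inverse (sqrt M))\<^sup>2" unfolding K_def by (rule power_mult_distrib)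
    also have "\<dots> = S * inverse M" using Spos Mpos by (simp add: power_inverse)
    finally show ?thesis using Mpos by simp
  qed
  define mv where "mv = K * (real \<nu> - 2) / T \<nu>"
  have mvpos: "mv > 0" unfolding mv_def using Kpos \<nu>3 T\<nu> by simp
  define b where "b j = (if j \<le> \<nu> then mv else K / w j)" for j
  define a where "a j = b j / d j" for j
  have dj: "d j > 0" if "j \<in> {1..p}" for j using dpos that by blast
  have ab: "d j * a j = b j" if "j \<in> {1..p}" for j unfolding a_def using dj[OF that] by simp
  have bpos: "b j > 0" if "j \<in> {1..p}" for j unfolding b_def using mvpos Kpos wpos[OF that] by simp
  have apos: "a j > 0" if "j \<in> {1..p}" for j unfolding a_def using bpos[OF that] dj[OF that] by simp
  have blt: "b j < mv" if "j \<in> {\<nu>+1..p}" for j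
  proof -
    have wj: "w j > 0" using wpos that \<nu>3 by auto
    have "K * T \<nu> < K * ((real \<nu> - 2) * w j)" using wgt[OF that] Kpos by simp
    then have "K / w j < K * (real \<nu> - 2) / T \<nu>" using wj T\<nu> by (simp add: field_simps)
    then show ?thesis unfolding b_def mv_def using that by simp
  qed
  have beq: "b j = mv" if "j \<le> \<nu>" for j unfolding b_def using that by simp
  have ble: "b j \<le> mv" if "j \<in> {1..p}" for j using blt[of j] beq[of j] that by (cases "j \<le> \<nu>") auto
  have Maxb: "Max ((\<lambda>j. d j * a j) ` {1..p}) = mv"
  proof (rule Max_eqI)
    show "y \<le> mv" if "y \<in> (\<lambda>j. d j * a j) ` {1..p}" for y using that ab ble by auto
    show "mv \<in> (\<lambda>j. d j * a j) ` {1..p}" using ab[of 1] beq[of 1] p3 \<nu>3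
      by (intro image_eqI[of _ _ 1]) auto
  qed auto
  note split = sum_split_nat[OF \<nu>p]
  have S_alt: "(\<Sum>j=1..p. (d j)\<^sup>2 / (d j + \<gamma> j)) = S" unfolding S_def by (intro sum.cong refl) (simp add: winv)
  have Q_alt: "(\<Sum>j=\<nu>+1..p. (d j)\<^sup>2 / (d j + \<gamma> j)) = Q" unfolding Q_def by (intro sum.cong refl) (simp add: winv)
  have T_alt: "(\<Sum>k=1..\<nu>. (d k + \<gamma> k) / (d k)\<^sup>2) = T \<nu>" unfolding T_def w_def ..
  have wb2: "(d j + \<gamma> j) * (a j)\<^sup>2 = w j * (b j)\<^sup>2" if "j \<in> {1..p}" for j
    unfolding a_def w_def using dpos that by (simp add: power_divide)
  have sq1: "(\<Sum>j=1..\<nu>. w j * (b j)\<^sup>2) = mv\<^sup>2 * T \<nu>"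
    unfolding T_def by (simp add: beq sum_distrib_left mult.commute)
  have sq2: "(\<Sum>j=\<nu>+1..p. w j * (b j)\<^sup>2) = K\<^sup>2 * Q"
    unfolding Q_def sum_distrib_left
  proof (intro sum.cong refl)
    fix j assume j: "j \<in> {\<nu>+1..p}"
    then have wj: "w j > 0" using wpos by auto
    show "w j * (b j)\<^sup>2 = K\<^sup>2 * (1 / w j)" unfolding b_def using j wj by (simp add: power2_eq_square field_simps)
  qed
  have mvT: "mv\<^sup>2 * T \<nu> = K\<^sup>2 * ((real \<nu> - 2)\<^sup>2 / T \<nu>)"
    unfolding mv_def using T\<nu> by (simp add: power2_eq_square field_simps)
  have normb: "(\<Sum>j=1..p. w j * (b j)\<^sup>2) = S"
    using split[of "\<lambda>j. w j * (b j)\<^sup>2"] sq1 sq2 mvT KKM unfolding M_def by (simp add: algebra_simps)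
  have feas: "feasible p d \<gamma> a"
    unfolding feasible_def
  proof
    show "\<forall>j\<in>{1..p}. 0 \<le> a j" using apos by (auto intro: less_imp_le)
    have "(\<Sum>j=1..p. (d j + \<gamma> j) * (a j)\<^sup>2) = (\<Sum>j=1..p. w j * (b j)\<^sup>2)" by (intro sum.cong refl) (simp add: wb2)
    then show "(\<Sum>j=1..p. (d j + \<gamma> j) * (a j)\<^sup>2) = (\<Sum>j=1..p. (d j)\<^sup>2 / (d j + \<gamma> j))" using normb S_alt by simp
  qed
  have sumb: "(\<Sum>j=1..p. d j * a j) = real \<nu> * mv + K * Q"
  proof -
    have "(\<Sum>j=1..p. d j * a j) = (\<Sum>j=1..p. b j)" by (intro sum.cong refl) (simp add: ab)
    also have "\<dots> = (\<Sum>j=1..\<nu>. b j) + (\<Sum>j=\<nu>+1..p. b j)" by (rule split)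
    also have "(\<Sum>j=1..\<nu>. b j) = real \<nu> * mv" by (simp add: beq)
    also have "(\<Sum>j=\<nu>+1..p. b j) = K * Q" unfolding Q_def sum_distrib_left b_def
      by (intro sum.cong refl) auto
    finally show ?thesis .
  qed
  have cval: "cstar p d a = K * M"
  proof -
    have "cstar p d a = real \<nu> * mv + K * Q - 2 * mv" unfolding cstar_def Maxb sumb ..
    also have "\<dots> = (real \<nu> - 2) * mv + K * Q" by (simp add: algebra_simps)
    also have "\<dots> = K * M" unfolding mv_def M_def by (simp add: power2_eq_square field_simps)
    finally show ?thesis .
  qed
  have KM: "K * M > 0" using Kpos Mpos by simp
  have cert: "K * cstar p d a' \<le> (\<Sum>j=1..p. w j * b j * (d j * a' j))"
    and cert2: "(\<Sum>j=1..p. w j * b j * (d j * a' j)) \<le> S"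
    and norm': "(\<Sum>j=1..p. w j * (d j * a' j)\<^sup>2) = S"
    if f: "feasible p d \<gamma> a'" for a'
  proof -
    define b' where "b' j = d j * a' j" for j
    have b'0: "b' j \<ge> 0" if "j \<in> {1..p}" for j unfolding b'_def using f that dpos unfolding feasible_def
      by (meson less_imp_le mult_nonneg_nonneg)
    show n': "(\<Sum>j=1..p. w j * (d j * a' j)\<^sup>2) = S"
    proof -
      have "(\<Sum>j=1..p. w j * (d j * a' j)\<^sup>2) = (\<Sum>j=1..p. (d j + \<gamma> j) * (a' j)\<^sup>2)"
        unfolding w_def
      proof (intro sum.cong refl)
        fix j assume "j \<in> {1..p}"
        then have "d j > 0" using dj by blast
        then show "(d j + \<gamma> j) / (d j)\<^sup>2 * (d j * a' j)\<^sup>2 = (d j + \<gamma> j) * (a' j)\<^sup>2"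
          by (simp add: power_mult_distrib)
      qed
      then show ?thesis using f S_alt unfolding feasible_def by simp
    qed
    define m' where "m' = Max (b' ` {1..p})"
    have bm': "b' j \<le> m'" if "j \<in> {1..p}" for j unfolding m'_def using that by (intro Max_ge) auto
    have cs: "cstar p d a' = (\<Sum>j=1..p. b' j) - 2 * m'" unfolding cstar_def m'_def b'_def ..
    have "K * (\<Sum>j=1..p. b' j) - (\<Sum>j=1..p. w j * b j * b' j) = (\<Sum>j=1..p. (K - w j * b j) * b' j)"
      by (simp add: sum_distrib_left sum_subtractf algebra_simps)
    also have "\<dots> = (\<Sum>j=1..\<nu>. (K - w j * b j) * b' j) + (\<Sum>j=\<nu>+1..p. (K - w j * b j) * b' j)" by (rule split)
    also have "(\<Sum>j=\<nu>+1..p. (K - w j * b j) * b' j) = 0"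
    proof (intro sum.neutral ballI)
      fix j assume j: "j \<in> {\<nu>+1..p}"
      then have "w j > 0" using wpos by auto
      then show "(K - w j * b j) * b' j = 0" unfolding b_def using j by simp
    qed
    also have "(\<Sum>j=1..\<nu>. (K - w j * b j) * b' j) \<le> (\<Sum>j=1..\<nu>. (K - w j * b j) * m')"
    proof (intro sum_mono mult_left_mono)
      fix j assume j: "j \<in> {1..\<nu>}"
      show "b' j \<le> m'" using bm' j \<nu>p by auto
      have "w j * mv \<le> K"
      proof -
        have "w j * mv = K * ((real \<nu> - 2) * w j) / T \<nu>" unfolding mv_def by (simp add: field_simps)
        also have "\<dots> \<le> K * T \<nu> / T \<nu>" using wle[OF j] Kpos T\<nu> by (intro divide_right_mono mult_left_mono) auto
        finally show ?thesis using T\<nu> by simp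
      qed
      then show "0 \<le> K - w j * b j" using beq j by auto
    qed
    also have "(\<Sum>j=1..\<nu>. (K - w j * b j) * m') = (real \<nu> * K - mv * T \<nu>) * m'"
      unfolding T_def by (simp add: beq sum_distrib_right sum_subtractf sum_distrib_left algebra_simps)
    also have "real \<nu> * K - mv * T \<nu> = 2 * K" unfolding mv_def using T\<nu> by (simp add: field_simps)
    finally have A: "K * (\<Sum>j=1..p. b' j) - (\<Sum>j=1..p. w j * b j * b' j) \<le> 2 * K * m'" by simp
    show "K * cstar p d a' \<le> (\<Sum>j=1..p. w j * b j * (d j * a' j))"
      using A unfolding cs b'_def[symmetric] by (simp add: algebra_simps)
    have "(\<Sum>j=1..p. w j * b j * b' j) \<le> (\<Sum>j=1..p. (w j * (b j)\<^sup>2 + w j * (b' j)\<^sup>2) / 2)"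
    proof (intro sum_mono)
      fix j assume j: "j \<in> {1..p}"
      have "0 \<le> w j * (b j - b' j)\<^sup>2" using wpos[OF j] by simp
      then show "w j * b j * b' j \<le> (w j * (b j)\<^sup>2 + w j * (b' j)\<^sup>2) / 2"
        by (simp add: power2_eq_square algebra_simps)
    qed
    also have "\<dots> = S" using normb n' unfolding b'_def
      by (simp add: sum_divide_distrib[symmetric] sum.distrib)
    finally show "(\<Sum>j=1..p. w j * b j * (d j * a' j)) \<le> S" unfolding b'_def .
  qed
  have sol: "is_solution p d \<gamma> a"
    unfolding is_solution_def
  proof (intro conjI feas allI impI)
    fix a' assume f: "feasible p d \<gamma> a'"
    have "K * cstar p d a' \<le> K * (K * M)" using cert[OF f] cert2[OF f] KKM by (simp add: power2_eq_square)
    then show "cstar p d a' \<le> cstar p d a" using Kpos cval by simp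
  qed
  have uniq: "\<forall>j\<in>{1..p}. a' j = a j" if s': "is_solution p d \<gamma> a'" for a'
  proof -
    have f: "feasible p d \<gamma> a'" using s' unfolding is_solution_def by simp
    have "cstar p d a \<le> cstar p d a'" using s' feas unfolding is_solution_def by simp
    then have "K * (K * M) \<le> K * cstar p d a'" using Kpos cval by simp
    then have X: "(\<Sum>j=1..p. w j * b j * (d j * a' j)) = S"
      using cert[OF f] cert2[OF f] KKM by (simp add: power2_eq_square)
    have "(\<Sum>j=1..p. w j * (b j - d j * a' j)\<^sup>2) =
          (\<Sum>j=1..p. w j * (b j)\<^sup>2) - 2 * (\<Sum>j=1..p. w j * b j * (d j * a' j)) + (\<Sum>j=1..p. w j * (d j * a' j)\<^sup>2)"
      by (simp add: power2_eq_square algebra_simps sum.distrib sum_subtractf sum_distrib_left)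
    also have "\<dots> = 0" using normb X norm'[OF f] by simp
    finally have Z: "(\<Sum>j=1..p. w j * (b j - d j * a' j)\<^sup>2) = 0" .
    show ?thesis
    proof
      fix j assume j: "j \<in> {1..p}"
      have "w j * (b j - d j * a' j)\<^sup>2 = 0"
      proof -
        have nn: "\<forall>i\<in>{1..p}. 0 \<le> w i * (b i - d i * a' i)\<^sup>2"
        proof
          fix i assume "i \<in> {1..p}" then show "0 \<le> w i * (b i - d i * a' i)\<^sup>2" using wpos[of i] by simp
        qed
        show ?thesis using Z j nn by (subst (asm) sum_nonneg_eq_0_iff) auto
      qed
      then have "b j = d j * a' j" using wpos[OF j] by simp
      then show "a' j = a j" using ab[OF j] dj[OF j] by simp
    qed
  qed
  have setnu: "{j\<in>{1..p}. d j * a j = mv} = {1..\<nu>}"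
  proof
    show "{j\<in>{1..p}. d j * a j = mv} \<subseteq> {1..\<nu>}"
    proof
      fix j assume "j \<in> {j\<in>{1..p}. d j * a j = mv}"
      then have j: "j \<in> {1..p}" "b j = mv" using ab by auto
      show "j \<in> {1..\<nu>}" using blt[of j] j by (cases "j \<le> \<nu>") auto
    qed
    show "{1..\<nu>} \<subseteq> {j\<in>{1..p}. d j * a j = mv}" using \<nu>p ab beq by auto
  qed
  have nueq: "Max {j\<in>{1..p}. d j * a j = mv} = \<nu>" unfolding setnu using \<nu>3 by (intro Max_eqI) auto
  have let_part: "\<nu> \<ge> 3
                 \<and> (\<forall>j\<in>{1..\<nu>}. d j * a j = d 1 * a 1)
                 \<and> (\<forall>j\<in>{\<nu>+1..p}. d 1 * a 1 > d j * a j)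
                 \<and> (\<forall>j\<in>{1..\<nu>}. a j = K * inverse (T \<nu>) * (real \<nu> - 2) / d j)
                 \<and> (\<forall>j\<in>{\<nu>+1..p}. a j = K * (d j / (d j + \<gamma> j)))
                 \<and> cstar p d a = K * M
                 \<and> K * M > 0"
  proof (intro conjI ballI \<nu>3 cval KM)
    have a1: "d 1 * a 1 = mv" using ab[of 1] beq[of 1] p3 \<nu>3 by auto
    show "d j * a j = d 1 * a 1" if "j \<in> {1..\<nu>}" for j using that ab beq a1 \<nu>p by auto
    show "d 1 * a 1 > d j * a j" if "j \<in> {\<nu>+1..p}" for j using that ab blt a1 by auto
    show "a j = K * inverse (T \<nu>) * (real \<nu> - 2) / d j" if "j \<in> {1..\<nu>}" for j
      using that unfolding a_def b_def mv_def by (simp add: field_simps)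
    show "a j = K * (d j / (d j + \<gamma> j))" if j: "j \<in> {\<nu>+1..p}" for j
    proof -
      have "j \<in> {1..p}" using j by auto
      then have dj0: "d j > 0" and g0: "d j + \<gamma> j > 0" using dpos dg by auto
      define g where "g = d j + \<gamma> j"
      have g: "g > 0" using g0 by (simp add: g_def)
      have "a j = K / (g / (d j)\<^sup>2) / d j" using j unfolding a_def b_def w_def g_def by simp
      also have "\<dots> = K * (d j / g)" using g dj0 by (simp add: field_simps power2_eq_square)
      finally show ?thesis unfolding g_def .
    qed
  qed
  show ?thesis
    apply (rule exI[of _ a])
    apply (intro conjI sol allI impI)
       apply (erule uniq)
    subgoal unfolding Let_def Maxb nueq S_alt T_alt Q_alt M_def[symmetric] K_def[symmetric]
      by (rule let_part)
    subgoal using apos by simp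
    subgoal using cval KM by simp
    done
qed



lemma cle_lemma: "0 < cstar p d a \<Longrightarrow> cstar p d a \<le> 2 * ((\<Sum>j=1..p. d j * a j) - 2 * Max ((\<lambda>j. d j * a j) ` {1..p}))"
proof -
  have aux: "0 < (c::real) \<Longrightarrow> c \<le> 2 * c" for c by simp
  show "0 < cstar p d a \<Longrightarrow> cstar p d a \<le> 2 * ((\<Sum>j=1..p. d j * a j) - 2 * Max ((\<lambda>j. d j * a j) ` {1..p}))"
    unfolding cstar_def by (rule aux)
qed

theorem theorem2:
  fixes p :: nat and d \<gamma> :: "nat \<Rightarrow> real"
  assumes p3: "p \<ge> 3"
    and dpos: "\<forall>j\<in>{1..p}. d j > 0"
    and gnn: "\<forall>j\<in>{1..p}. \<gamma> j \<ge> 0"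
    and sorted: "\<forall>j. 1 \<le> j \<and> j < p \<longrightarrow>
                   (d j)\<^sup>2 / (d j + \<gamma> j) \<ge> (d (j+1))\<^sup>2 / (d (j+1) + \<gamma> (j+1))"
  shows "\<exists>a. is_solution p d \<gamma> a
           \<and> (\<forall>b. is_solution p d \<gamma> b \<longrightarrow> (\<forall>j\<in>{1..p}. b j = a j))
           \<and> (let mx = Max ((\<lambda>j. d j * a j) ` {1..p});
                  \<nu> = Max {j\<in>{1..p}. d j * a j = mx};
                  S = (\<Sum>j=1..p. (d j)\<^sup>2 / (d j + \<gamma> j));
                  T = (\<Sum>k=1..\<nu>. (d k + \<gamma> k) / (d k)\<^sup>2);
                  M = (real \<nu> - 2)\<^sup>2 / T + (\<Sum>j=\<nu>+1..p. (d j)\<^sup>2 / (d j + \<gamma> j));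
                  K = sqrt S * inverse (sqrt M)
              in \<nu> \<ge> 3
                 \<and> (\<forall>j\<in>{1..\<nu>}. d j * a j = d 1 * a 1)
                 \<and> (\<forall>j\<in>{\<nu>+1..p}. d 1 * a 1 > d j * a j)
                 \<and> (\<forall>j\<in>{1..\<nu>}. a j = K * inverse T * (real \<nu> - 2) / d j)
                 \<and> (\<forall>j\<in>{\<nu>+1..p}. a j = K * (d j / (d j + \<gamma> j)))
                 \<and> cstar p d a = K * M
                 \<and> K * M > 0)
           \<and> minimax p d (\<lambda>x. delta_est p (cstar p d a) a x)"
    using part_A[OF p3 dpos gnn sorted]
  apply (elim exE conjE)
  subgoal for a
    apply (rule exI[of _ a])
    apply (intro conjI)
       apply assumption
      apply assumption
     apply assumption
    apply (rule minimax_general[OF dpos])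
      apply assumption
     apply (rule less_imp_le, assumption)
    apply (rule cle_lemma, assumption)
    done
  done



end
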